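(* Let $G=B_{n_0,\dots,n_g}$, let $E$ be an effective divisor supported on the non-multivalent vertices of $G$ with at most one chip on each strand, and let $e=\deg E$. Let $a,b$ be integers with $a\ge0$ and $0\le b\le g-e$. Then $$r(a v_{0,0}+b v_{0,n_0}+E)=\min\{a,b\}+\max\{0,\ \max\{a,b\}-(g-e)\}.$$
   Context: A graph is a finite, connected, loopless multigraph (parallel edges allowed); its genus is $g=|E(G)|-|V(G)|+1$. A divisor is an element of the free abelian group on $V(G)$. Linear equivalence is generated by chip-firing (firing $w$ subtracts $\mathrm{val}(w)$ chips from $w$ and adds to each other vertex the number of edges joining it to $w$). The rank $r(D)$ is $-1$ if $D$ is not equivalent to an effective divisor, else the largest $r\ge0$ such that $D-E'$ is equivalent to an effective divisor for every effective $E'$ of degree $r$. For positive integers $n_0,\dots,n_g$, the banana graph $B_{n_0,\dots,n_g}$ is obtained by joining two vertices by $g+1$ internally disjoint paths of lengths $n_0,\dots,n_g$; it has genus $g$. Its vertices are labelled $v_{\alpha,i}$ ($0\le\alpha\le g$, $0\le i\le n_\alpha$), with $v_{\alpha,i}$ at distance $i$ from $v_{0,0}$ along the $\alpha$-th path; $v_{\alpha,0}=v_{0,0}$ and $v_{\alpha,n_\alpha}=v_{0,n_0}$ for all $\alpha$ are the two multivalent vertices. The $\alpha$-th strand is $\{v_{\alpha,0},\dots,v_{\alpha,n_\alpha}\}$. *)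

theory Defs
  imports Main
begin

text \<open>A multigraph on the finite vertex set V is given by an edge-multiplicity
function m (m x y = number of edges joining x and y). Divisors are integer-valued
functions on vertices; only their values on V matter.\<close>

definition deg :: "'v set \<Rightarrow> ('v \<Rightarrow> int) \<Rightarrow> int" where
  "deg V D = (\<Sum>x\<in>V. D x)"

definition effective :: "'v set \<Rightarrow> ('v \<Rightarrow> int) \<Rightarrow> bool" where
  "effective V D \<longleftrightarrow> (\<forall>x\<in>V. D x \<ge> 0)"

text \<open>Linear equivalence generated by chip-firing: D' is obtained from D by firing
each vertex x exactly f x times (an integer, negative meaning reverse firing).
Firing w subtracts val(w) = sum of m w y from w and adds m x w to every other x.\<close>

definition lin_equiv :: "'v set \<Rightarrow> ('v \<Rightarrow> 'v \<Rightarrow> nat) \<Rightarrow> ('v \<Rightarrow> int) \<Rightarrow> ('v \<Rightarrow> int) \<Rightarrow> bool" where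
  "lin_equiv V m D D' \<longleftrightarrow>
     (\<exists>f :: 'v \<Rightarrow> int. \<forall>x\<in>V. D' x = D x - (\<Sum>y\<in>V. int (m x y) * (f x - f y)))"

definition rank_ge :: "'v set \<Rightarrow> ('v \<Rightarrow> 'v \<Rightarrow> nat) \<Rightarrow> ('v \<Rightarrow> int) \<Rightarrow> nat \<Rightarrow> bool" where
  "rank_ge V m D r \<longleftrightarrow>
     (\<forall>E'. effective V E' \<and> deg V E' = int r \<longrightarrow>
        (\<exists>D'. lin_equiv V m (\<lambda>x. D x - E' x) D' \<and> effective V D'))"

definition rank :: "'v set \<Rightarrow> ('v \<Rightarrow> 'v \<Rightarrow> nat) \<Rightarrow> ('v \<Rightarrow> int) \<Rightarrow> int" where
  "rank V m D = (if \<not> rank_ge V m D 0 then -1 else int (GREATEST r. rank_ge V m D r))"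

text \<open>Vertex v_{alpha,i} of the banana graph B_{n_0,...,n_g} is represented by the pair
(alpha,i), except that the two multivalent vertices are represented canonically by
(0,0) = v_{0,0} and (0, n 0) = v_{0,n_0}.\<close>

definition bvtx :: "(nat \<Rightarrow> nat) \<Rightarrow> nat \<Rightarrow> nat \<Rightarrow> nat \<times> nat" where
  "bvtx n \<alpha> i = (if i = 0 then (0,0) else if i = n \<alpha> then (0, n 0) else (\<alpha>, i))"

definition banana_V :: "nat \<Rightarrow> (nat \<Rightarrow> nat) \<Rightarrow> (nat \<times> nat) set" where
  "banana_V g n = {bvtx n \<alpha> i | \<alpha> i. \<alpha> \<le> g \<and> i \<le> n \<alpha>}"

definition banana_m :: "nat \<Rightarrow> (nat \<Rightarrow> nat) \<Rightarrow> nat \<times> nat \<Rightarrow> nat \<times> nat \<Rightarrow> nat" where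
  "banana_m g n x y = card {(\<alpha>, i). \<alpha> \<le> g \<and> i < n \<alpha> \<and>
      ((bvtx n \<alpha> i = x \<and> bvtx n \<alpha> (Suc i) = y) \<or> (bvtx n \<alpha> i = y \<and> bvtx n \<alpha> (Suc i) = x))}"

end

theory Submission
  imports Defs
begin



locale ban =
  fixes g :: nat and n :: "nat \<Rightarrow> nat"
  assumes npos: "\<And>\<alpha>. \<alpha> \<le> g \<Longrightarrow> 1 \<le> n \<alpha>"
begin

abbreviation "V \<equiv> banana_V g n"
abbreviation "M \<equiv> banana_m g n"
abbreviation "b \<equiv> bvtx n"
abbreviation "NN \<equiv> (0::nat, 0::nat)"
abbreviation "SS \<equiv> (0::nat, n 0)"
abbreviation "Ed \<equiv> Sigma {..g} (\<lambda>\<alpha>. {..<n \<alpha>})"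

lemma n0: "1 \<le> n 0" using npos by auto

lemma NS_ne: "NN \<noteq> SS" using n0 by auto

lemma b0[simp]: "b \<alpha> 0 = NN" by (simp add: bvtx_def)
lemma bn: "\<alpha> \<le> g \<Longrightarrow> b \<alpha> (n \<alpha>) = SS" using npos[of \<alpha>] by (auto simp: bvtx_def)
lemma bint: "0 < i \<Longrightarrow> i < n \<alpha> \<Longrightarrow> b \<alpha> i = (\<alpha>, i)" by (simp add: bvtx_def)

lemma b_in_V: "\<alpha> \<le> g \<Longrightarrow> i \<le> n \<alpha> \<Longrightarrow> b \<alpha> i \<in> V" by (auto simp: banana_V_def)
lemma N_in_V: "NN \<in> V" using b_in_V[of 0 0] by simp
lemma S_in_V: "SS \<in> V" using b_in_V[of 0 "n 0"] bn[of 0] by simp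
lemma int_in_V: "\<alpha> \<le> g \<Longrightarrow> 0 < p \<Longrightarrow> p < n \<alpha> \<Longrightarrow> (\<alpha>,p) \<in> V"
  using b_in_V[of \<alpha> p] bint[of p \<alpha>] by simp

lemma V_cases: "x \<in> V \<Longrightarrow> x = NN \<or> x = SS \<or> (\<exists>\<alpha> p. x = (\<alpha>,p) \<and> \<alpha> \<le> g \<and> 0 < p \<and> p < n \<alpha>)"
  by (auto simp: banana_V_def bvtx_def)

lemma finite_V: "finite V"
proof -
  have "V \<subseteq> (\<lambda>(\<alpha>,i). b \<alpha> i) ` Sigma {..g} (\<lambda>\<alpha>. {..n \<alpha>})"
    by (auto simp: banana_V_def)
  then show ?thesis by (rule finite_subset) auto
qed

lemma int_ne_S: "p < n \<alpha> \<Longrightarrow> (\<alpha>,p) \<noteq> SS" by auto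

lemma b_eq_int: "\<beta> \<le> g \<Longrightarrow> i \<le> n \<beta> \<Longrightarrow> 0 < p \<Longrightarrow> p < n \<alpha> \<Longrightarrow> b \<beta> i = (\<alpha>,p) \<longleftrightarrow> \<beta> = \<alpha> \<and> i = p"
  by (auto simp: bvtx_def)

lemma b_eq_N: "\<beta> \<le> g \<Longrightarrow> i \<le> n \<beta> \<Longrightarrow> b \<beta> i = NN \<longleftrightarrow> i = 0"
  using n0 by (auto simp: bvtx_def)

lemma b_eq_S: "\<beta> \<le> g \<Longrightarrow> i \<le> n \<beta> \<Longrightarrow> b \<beta> i = SS \<longleftrightarrow> i = n \<beta>"
  using npos[of \<beta>] n0 by (auto simp: bvtx_def)

lemma noloop: "\<alpha> \<le> g \<Longrightarrow> i < n \<alpha> \<Longrightarrow> b \<alpha> i \<noteq> b \<alpha> (Suc i)"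
  using n0 by (auto simp: bvtx_def)

lemma M_alt: "M x y = card {e \<in> Ed. (b (fst e) (snd e) = x \<and> b (fst e) (Suc (snd e)) = y) \<or>
     (b (fst e) (snd e) = y \<and> b (fst e) (Suc (snd e)) = x)}"
  unfolding banana_m_def by (rule arg_cong[where f=card]) auto

lemma M_sym: "M x y = M y x"
  unfolding M_alt by (rule arg_cong[where f=card]) auto

lemma card_sum_if: "finite A \<Longrightarrow> int (card {e\<in>A. P e}) = (\<Sum>e\<in>A. if P e then 1 else 0)"
  by (simp add: sum.If_cases Int_def)

lemma if_disj: "\<not>(A \<and> B) \<Longrightarrow> (if A \<or> B then 1 else 0) = (if A then 1 else 0) + (if B then (1::int) else 0)"
  by auto

lemma sum_if2: "finite V \<Longrightarrow> u \<in> V \<Longrightarrow> v \<in> V \<Longrightarrow>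
  (\<Sum>y\<in>V. ((if u = x \<and> v = y then 1 else 0) + (if u = y \<and> v = x then 1 else 0)) * (w y::int))
   = (if u = x then w v else 0) + (if v = x then w u else 0)"
proof -
  assume f: "finite V" and uv: "u \<in> V" "v \<in> V"
  have "(\<Sum>y\<in>V. ((if u = x \<and> v = y then 1 else 0) + (if u = y \<and> v = x then 1 else 0)) * (w y::int))
     = (\<Sum>y\<in>V. (if u = x then (if v = y then w y else 0) else 0) + (if v = x then (if u = y then w y else 0) else 0))"
    by (rule sum.cong) auto
  also have "\<dots> = (if u = x then (\<Sum>y\<in>V. if v = y then w y else 0) else 0) + (if v = x then (\<Sum>y\<in>V. if u = y then w y else 0) else 0)"
    by (simp add: sum.distrib)
  also have "\<dots> = (if u = x then w v else 0) + (if v = x then w u else 0)"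
    using f uv by simp
  finally show ?thesis .
qed

definition lft :: "nat \<times> nat \<Rightarrow> nat \<times> nat" where "lft e = b (fst e) (snd e)"
definition rgt :: "nat \<times> nat \<Rightarrow> nat \<times> nat" where "rgt e = b (fst e) (Suc (snd e))"

lemma lr_V: "e \<in> Ed \<Longrightarrow> lft e \<in> V \<and> rgt e \<in> V"
  by (cases e) (auto simp: lft_def rgt_def intro!: b_in_V)

lemma lr_ne: "e \<in> Ed \<Longrightarrow> lft e \<noteq> rgt e"
  by (cases e) (auto simp: lft_def rgt_def dest: noloop)

lemma nbr_sum0:
  "(\<Sum>y\<in>V. int (M x y) * w y) = (\<Sum>e\<in>Ed. (if lft e = x then w (rgt e) else 0)
       + (if rgt e = x then w (lft e) else 0))"
proof -
  have fE: "finite Ed" by auto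
  have "(\<Sum>y\<in>V. int (M x y) * w y) =
        (\<Sum>y\<in>V. \<Sum>e\<in>Ed. ((if lft e = x \<and> rgt e = y then 1 else 0)
          + (if lft e = y \<and> rgt e = x then 1 else 0)) * w y)"
  proof (rule sum.cong[OF refl])
    fix y assume "y \<in> V"
    have "int (M x y) = (\<Sum>e\<in>Ed. if (lft e = x \<and> rgt e = y) \<or> (lft e = y \<and> rgt e = x) then 1 else 0)"
      unfolding M_alt lft_def rgt_def by (rule card_sum_if[OF fE])
    also have "\<dots> = (\<Sum>e\<in>Ed. (if lft e = x \<and> rgt e = y then 1 else 0)
          + (if lft e = y \<and> rgt e = x then 1 else 0))"
    proof (rule sum.cong[OF refl])
      fix e assume "e \<in> Ed"
      then have "lft e \<noteq> rgt e" by (rule lr_ne)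
      then have "\<not> ((lft e = x \<and> rgt e = y) \<and> (lft e = y \<and> rgt e = x))" by metis
      then show "(if (lft e = x \<and> rgt e = y) \<or> (lft e = y \<and> rgt e = x) then 1 else 0) =
          (if lft e = x \<and> rgt e = y then 1 else 0) + (if lft e = y \<and> rgt e = x then (1::int) else 0)"
        by (rule if_disj)
    qed
    finally show "int (M x y) * w y = (\<Sum>e\<in>Ed. ((if lft e = x \<and> rgt e = y then 1 else 0)
          + (if lft e = y \<and> rgt e = x then 1 else 0)) * w y)"
      by (simp add: sum_distrib_right)
  qed
  also have "\<dots> = (\<Sum>e\<in>Ed. \<Sum>y\<in>V. ((if lft e = x \<and> rgt e = y then 1 else 0)
          + (if lft e = y \<and> rgt e = x then 1 else 0)) * w y)"
    by (rule sum.swap)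
  also have "\<dots> = (\<Sum>e\<in>Ed. (if lft e = x then w (rgt e) else 0)
       + (if rgt e = x then w (lft e) else 0))"
    by (rule sum.cong[OF refl], rule sum_if2[OF finite_V]) (auto intro: lr_V[THEN conjunct1] lr_V[THEN conjunct2])
  finally show ?thesis .
qed

end


context ban begin

lemma nbr_sum:
  "(\<Sum>y\<in>V. int (M x y) * w y) = (\<Sum>\<beta>\<le>g. \<Sum>i<n \<beta>. (if b \<beta> i = x then w (b \<beta> (Suc i)) else 0)
       + (if b \<beta> (Suc i) = x then w (b \<beta> i) else 0))"
  unfolding nbr_sum0 lft_def rgt_def by (simp add: sum.Sigma split_def)

lemma NB_int:
  assumes a: "\<alpha> \<le> g" "0 < p" "p < n \<alpha>"
  shows "(\<Sum>y\<in>V. int (M (\<alpha>,p) y) * w y) = w (b \<alpha> (p - 1)) + w (b \<alpha> (Suc p))"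
proof -
  have "(\<Sum>y\<in>V. int (M (\<alpha>,p) y) * w y) = (\<Sum>\<beta>\<le>g. \<Sum>i<n \<beta>.
      (if \<beta> = \<alpha> then (if i = p then w (b \<alpha> (Suc p)) else 0) + (if i = p - 1 then w (b \<alpha> (p - 1)) else 0) else 0))"
    unfolding nbr_sum
  proof (intro sum.cong refl)
    fix \<beta> i assume "\<beta> \<in> {..g}" "i \<in> {..<n \<beta>}"
    then have bi: "\<beta> \<le> g" "i < n \<beta>" by auto
    have e1: "b \<beta> i = (\<alpha>,p) \<longleftrightarrow> \<beta> = \<alpha> \<and> i = p" using b_eq_int[of \<beta> i p \<alpha>] bi a by auto
    have e2: "b \<beta> (Suc i) = (\<alpha>,p) \<longleftrightarrow> \<beta> = \<alpha> \<and> i = p - 1" using b_eq_int[of \<beta> "Suc i" p \<alpha>] bi a by auto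
    show "(if b \<beta> i = (\<alpha>, p) then w (b \<beta> (Suc i)) else 0) + (if b \<beta> (Suc i) = (\<alpha>, p) then w (b \<beta> i) else 0) =
      (if \<beta> = \<alpha> then (if i = p then w (b \<alpha> (Suc p)) else 0) + (if i = p - 1 then w (b \<alpha> (p - 1)) else 0) else 0)"
      unfolding e1 e2 by auto
  qed
  also have "\<dots> = (\<Sum>\<beta>\<le>g. if \<beta> = \<alpha> then (\<Sum>i<n \<alpha>. (if i = p then w (b \<alpha> (Suc p)) else 0) + (if i = p - 1 then w (b \<alpha> (p - 1)) else 0)) else 0)"
    by (intro sum.cong refl) auto
  also have "\<dots> = (\<Sum>i<n \<alpha>. (if i = p then w (b \<alpha> (Suc p)) else 0) + (if i = p - 1 then w (b \<alpha> (p - 1)) else 0))"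
    using a by simp
  also have "\<dots> = w (b \<alpha> (p - 1)) + w (b \<alpha> (Suc p))"
  proof -
    have "p - 1 < n \<alpha>" using a by arith
    then show ?thesis using a by (simp add: sum.distrib)
  qed
  finally show ?thesis .
qed

lemma NB_N:
  "(\<Sum>y\<in>V. int (M NN y) * w y) = (\<Sum>\<beta>\<le>g. w (b \<beta> 1))"
proof -
  have "(\<Sum>y\<in>V. int (M NN y) * w y) = (\<Sum>\<beta>\<le>g. \<Sum>i<n \<beta>. (if i = 0 then w (b \<beta> 1) else 0))"
    unfolding nbr_sum
  proof (intro sum.cong refl)
    fix \<beta> i assume "\<beta> \<in> {..g}" "i \<in> {..<n \<beta>}"
    then have bi: "\<beta> \<le> g" "i < n \<beta>" by auto
    have e1: "b \<beta> i = NN \<longleftrightarrow> i = 0" using b_eq_N[of \<beta> i] bi by auto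
    have e2: "b \<beta> (Suc i) \<noteq> NN" using b_eq_N[of \<beta> "Suc i"] bi by auto
    show "(if b \<beta> i = NN then w (b \<beta> (Suc i)) else 0) + (if b \<beta> (Suc i) = NN then w (b \<beta> i) else 0) =
      (if i = 0 then w (b \<beta> 1) else 0)"
      using e1 e2 by auto
  qed
  also have "\<dots> = (\<Sum>\<beta>\<le>g. w (b \<beta> 1))"
    using npos by (intro sum.cong refl) (simp add: Suc_le_eq)
  finally show ?thesis .
qed

lemma NB_S:
  "(\<Sum>y\<in>V. int (M SS y) * w y) = (\<Sum>\<beta>\<le>g. w (b \<beta> (n \<beta> - 1)))"
proof -
  have "(\<Sum>y\<in>V. int (M SS y) * w y) = (\<Sum>\<beta>\<le>g. \<Sum>i<n \<beta>. (if i = n \<beta> - 1 then w (b \<beta> (n \<beta> - 1)) else 0))"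
    unfolding nbr_sum
  proof (intro sum.cong refl)
    fix \<beta> i assume "\<beta> \<in> {..g}" "i \<in> {..<n \<beta>}"
    then have bi: "\<beta> \<le> g" "i < n \<beta>" by auto
    have e1: "b \<beta> i \<noteq> SS" using b_eq_S[of \<beta> i] bi by auto
    have e2: "b \<beta> (Suc i) = SS \<longleftrightarrow> i = n \<beta> - 1" using b_eq_S[of \<beta> "Suc i"] bi by auto
    show "(if b \<beta> i = SS then w (b \<beta> (Suc i)) else 0) + (if b \<beta> (Suc i) = SS then w (b \<beta> i) else 0) =
      (if i = n \<beta> - 1 then w (b \<beta> (n \<beta> - 1)) else 0)"
      using e1 e2 by auto
  qed
  also have "\<dots> = (\<Sum>\<beta>\<le>g. w (b \<beta> (n \<beta> - 1)))"
    using npos by (intro sum.cong refl) (simp add: Suc_le_eq)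
  finally show ?thesis .
qed

definition lap :: "(nat \<times> nat \<Rightarrow> int) \<Rightarrow> nat \<times> nat \<Rightarrow> int" where
  "lap f x = (\<Sum>y\<in>V. int (M x y) * (f x - f y))"

lemma lin_equiv_lap: "lin_equiv V M D D' \<longleftrightarrow> (\<exists>f. \<forall>x\<in>V. D' x = D x - lap f x)"
  unfolding lin_equiv_def lap_def ..

lemma lap_int: "\<alpha> \<le> g \<Longrightarrow> 0 < p \<Longrightarrow> p < n \<alpha> \<Longrightarrow>
   lap f (\<alpha>,p) = 2 * f (b \<alpha> p) - f (b \<alpha> (p - 1)) - f (b \<alpha> (Suc p))"
  unfolding lap_def using NB_int[of \<alpha> p "\<lambda>y. f (\<alpha>,p) - f y"] bint[of p \<alpha>] by simp

lemma lap_N: "lap f NN = (\<Sum>\<beta>\<le>g. f NN - f (b \<beta> 1))"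
  unfolding lap_def using NB_N[of "\<lambda>y. f NN - f y"] by simp

lemma lap_S: "lap f SS = (\<Sum>\<beta>\<le>g. f SS - f (b \<beta> (n \<beta> - 1)))"
  unfolding lap_def using NB_S[of "\<lambda>y. f SS - f y"] by simp

lemma deg_lap: "(\<Sum>x\<in>V. lap f x) = 0"
proof -
  have "(\<Sum>x\<in>V. lap f x) = (\<Sum>x\<in>V. \<Sum>y\<in>V. int (M x y) * f x) - (\<Sum>x\<in>V. \<Sum>y\<in>V. int (M x y) * f y)"
    unfolding lap_def by (simp add: sum_subtractf right_diff_distrib)
  also have "(\<Sum>x\<in>V. \<Sum>y\<in>V. int (M x y) * f y) = (\<Sum>y\<in>V. \<Sum>x\<in>V. int (M x y) * f y)"
    by (rule sum.swap)
  also have "\<dots> = (\<Sum>x\<in>V. \<Sum>y\<in>V. int (M x y) * f x)"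
    by (simp add: M_sym)
  finally show ?thesis by simp
qed

end


context ban begin

definition dl :: "nat \<times> nat \<Rightarrow> nat \<times> nat \<Rightarrow> int" where
  "dl v y = (if y = v then 1 else 0)"

definition chip :: "(nat \<Rightarrow> nat) \<Rightarrow> nat \<times> nat \<Rightarrow> int" where
  "chip J y = (if fst y \<le> g \<and> 0 < snd y \<and> J (fst y) = snd y then 1 else 0)"

definition Div :: "int \<Rightarrow> int \<Rightarrow> (nat \<Rightarrow> nat) \<Rightarrow> nat \<times> nat \<Rightarrow> int" where
  "Div m c J y = (if y = NN then m else 0) + (if y = SS then c else 0) + chip J y"

definition shapeJ :: "(nat \<Rightarrow> nat) \<Rightarrow> bool" where
  "shapeJ J \<longleftrightarrow> (\<forall>\<beta>\<le>g. J \<beta> < n \<beta>)"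

definition occ :: "(nat \<Rightarrow> nat) \<Rightarrow> nat" where
  "occ J = card {\<beta>\<in>{..g}. 0 < J \<beta>}"

definition shape :: "(nat \<Rightarrow> nat) \<Rightarrow> int \<Rightarrow> bool" where
  "shape J c \<longleftrightarrow> shapeJ J \<and> 0 \<le> c \<and> c + int (occ J) \<le> int g"

lemma chip_N[simp]: "chip J NN = 0" by (simp add: chip_def)
lemma chip_S: "shapeJ J \<Longrightarrow> chip J SS = 0" by (auto simp: chip_def shapeJ_def)
lemma chip_int: "\<alpha> \<le> g \<Longrightarrow> 0 < p \<Longrightarrow> chip J (\<alpha>,p) = (if J \<alpha> = p then 1 else 0)"
  by (simp add: chip_def)
lemma chip_nonneg: "0 \<le> chip J y" by (simp add: chip_def)

lemma Div_N: "Div m c J NN = m" using NS_ne by (simp add: Div_def)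
lemma Div_S: "shapeJ J \<Longrightarrow> Div m c J SS = c" using NS_ne by (simp add: Div_def chip_S)
lemma Div_int: "\<alpha> \<le> g \<Longrightarrow> 0 < p \<Longrightarrow> p < n \<alpha> \<Longrightarrow> Div m c J (\<alpha>,p) = (if J \<alpha> = p then 1 else 0)"
  using int_ne_S[of p \<alpha>] by (auto simp: Div_def chip_int)

lemma sum_chip: assumes "shapeJ J" shows "(\<Sum>x\<in>V. chip J x) = int (occ J)"
proof -
  have "{x\<in>V. fst x \<le> g \<and> 0 < snd x \<and> J (fst x) = snd x} = (\<lambda>\<beta>. (\<beta>, J \<beta>)) ` {\<beta>\<in>{..g}. 0 < J \<beta>}"
    using assms int_in_V by (auto simp: shapeJ_def image_iff)
  moreover have "inj_on (\<lambda>\<beta>. (\<beta>, J \<beta>)) {\<beta>\<in>{..g}. 0 < J \<beta>}" by (rule inj_onI) auto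
  ultimately have "card {x\<in>V. fst x \<le> g \<and> 0 < snd x \<and> J (fst x) = snd x} = occ J"
    unfolding occ_def by (simp add: card_image)
  moreover have "int (card {x\<in>V. fst x \<le> g \<and> 0 < snd x \<and> J (fst x) = snd x}) = (\<Sum>x\<in>V. chip J x)"
    unfolding chip_def by (rule card_sum_if[OF finite_V])
  ultimately show ?thesis by simp
qed

lemma deg_Div: assumes "shapeJ J" shows "deg V (Div m c J) = m + c + int (occ J)"
proof -
  have "deg V (Div m c J) = (\<Sum>x\<in>V. if x = NN then m else 0) + (\<Sum>x\<in>V. if x = SS then c else 0) + (\<Sum>x\<in>V. chip J x)"
    unfolding deg_def Div_def by (simp add: sum.distrib)
  then show ?thesis using sum_chip[OF assms] N_in_V S_in_V finite_V by simp
qed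

lemma effective_Div: "0 \<le> m \<Longrightarrow> 0 \<le> c \<Longrightarrow> effective V (Div m c J)"
  by (simp add: effective_def Div_def chip_def)

lemma lap_add: "lap (\<lambda>y. f1 y + f2 y) x = lap f1 x + lap f2 x"
  unfolding lap_def by (simp add: sum.distrib[symmetric] algebra_simps)

lemma le_refl: "lin_equiv V M D D"
  unfolding lin_equiv_lap by (rule exI[of _ "\<lambda>_. 0"]) (simp add: lap_def)

lemma le_trans: "lin_equiv V M D1 D2 \<Longrightarrow> lin_equiv V M D2 D3 \<Longrightarrow> lin_equiv V M D1 D3"
  unfolding lin_equiv_lap
proof (elim exE)
  fix f1 f2 assume h1: "\<forall>x\<in>V. D2 x = D1 x - lap f1 x" and h2: "\<forall>x\<in>V. D3 x = D2 x - lap f2 x"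
  have "\<forall>x\<in>V. D3 x = D1 x - lap (\<lambda>y. f1 y + f2 y) x"
    using h1 h2 by (simp add: lap_add)
  then show "\<exists>f. \<forall>x\<in>V. D3 x = D1 x - lap f x" by blast
qed

lemma le_add: "lin_equiv V M D1 D1' \<Longrightarrow> lin_equiv V M D2 D2' \<Longrightarrow>
   lin_equiv V M (\<lambda>x. D1 x + D2 x) (\<lambda>x. D1' x + D2' x)"
  unfolding lin_equiv_lap
proof (elim exE)
  fix f1 f2 assume h1: "\<forall>x\<in>V. D1' x = D1 x - lap f1 x" and h2: "\<forall>x\<in>V. D2' x = D2 x - lap f2 x"
  have "\<forall>x\<in>V. D1' x + D2' x = (D1 x + D2 x) - lap (\<lambda>y. f1 y + f2 y) x"
    using h1 h2 by (simp add: lap_add)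
  then show "\<exists>f. \<forall>x\<in>V. D1' x + D2' x = (D1 x + D2 x) - lap f x" by blast
qed

lemma le_cong: "lin_equiv V M D D' \<Longrightarrow> (\<And>x. x \<in> V \<Longrightarrow> D2 x = D x) \<Longrightarrow> (\<And>x. x \<in> V \<Longrightarrow> D2' x = D' x)
   \<Longrightarrow> lin_equiv V M D2 D2'"
  unfolding lin_equiv_lap by metis

lemma le_sub_dl: "lin_equiv V M D D' \<Longrightarrow> lin_equiv V M (\<lambda>x. D x - dl v x) (\<lambda>x. D' x - dl v x)"
  using le_add[of D D' "\<lambda>x. - dl v x" "\<lambda>x. - dl v x"] le_refl by simp

lemma deg_equiv: "lin_equiv V M D D' \<Longrightarrow> deg V D' = deg V D"
  unfolding lin_equiv_lap deg_def
proof (elim exE)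
  fix f assume h: "\<forall>x\<in>V. D' x = D x - lap f x"
  have "(\<Sum>x\<in>V. D' x) = (\<Sum>x\<in>V. D x - lap f x)" using h by (intro sum.cong) auto
  also have "\<dots> = (\<Sum>x\<in>V. D x)" using deg_lap[of f] by (simp add: sum_subtractf)
  finally show "(\<Sum>x\<in>V. D' x) = (\<Sum>x\<in>V. D x)" .
qed

lemma deg_dl: "v \<in> V \<Longrightarrow> deg V (dl v) = 1"
  using finite_V by (simp add: deg_def dl_def)

lemma deg_diff: "deg V (\<lambda>x. D x - D' x) = deg V D - deg V D'"
  by (simp add: deg_def sum_subtractf)

end



lemma mins2: "0 < r \<Longrightarrow> 2*int(min r a) - int(min (r-1) a) - int(min (Suc r) a) = (if r = a then 1 else 0)"
  by (auto simp: min_def)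

lemma min1: "int (min 1 a) = (if a = 0 then 0 else 1)" by (auto simp: min_def)

lemma minN: "a \<le> N \<Longrightarrow> 0 < N \<Longrightarrow> int (min (N - 1) a) = int a - (if a = N then 1 else 0)"
  by (auto simp: min_def)

lemma sw_arith: "0 < r \<Longrightarrow> 1 \<le> t \<Longrightarrow>
  2*int(min t (t+j-r)) - int(min t (t+j-(r-1))) - int(min t (t+j-Suc r)) =
   (if r = j then 1 else 0) - (if r = j + t then 1 else 0)"
  by (auto simp: min_def)

context ban begin

lemma pair_move:
  assumes a: "\<alpha> \<le> g" "p + q = p' + q'" "p \<le> n \<alpha>" "q \<le> n \<alpha>" "p' \<le> n \<alpha>" "q' \<le> n \<alpha>"
  shows "lin_equiv V M (\<lambda>x. dl (b \<alpha> p) x + dl (b \<alpha> q) x) (\<lambda>x. dl (b \<alpha> p') x + dl (b \<alpha> q') x)"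
proof -
  define H where "H r = int(min r p) + int(min r q) - int(min r p') - int(min r q')" for r
  define f where "f y = (if fst y = \<alpha> \<and> 0 < snd y \<and> snd y < n \<alpha> then H (snd y) else 0)" for y
  have H0: "H 0 = 0" by (simp add: H_def)
  have Hn: "H (n \<alpha>) = 0" using a by (simp add: H_def min_def)
  have fb: "f (b \<beta> r) = (if \<beta> = \<alpha> then H r else 0)" if rb: "\<beta> \<le> g" "r \<le> n \<beta>" for \<beta> r
  proof -
    consider "r = 0" | "r = n \<beta>" | "0 < r" "r < n \<beta>" using rb by (cases "r = 0"; cases "r = n \<beta>") auto
    then show ?thesis
    proof cases
      case 1 then show ?thesis by (simp add: f_def H0)
    next
      case 2 then show ?thesis using rb bn[of \<beta>] Hn by (auto simp: f_def)
    next
      case 3 then show ?thesis by (auto simp: f_def bint)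
    qed
  qed
  have dN: "dl (b \<alpha> s) NN = (if s = 0 then 1 else 0)" if "s \<le> n \<alpha>" for s
    using b_eq_N[of \<alpha> s] a that by (auto simp: dl_def)
  have dS: "dl (b \<alpha> s) SS = (if s = n \<alpha> then 1 else 0)" if "s \<le> n \<alpha>" for s
    using b_eq_S[of \<alpha> s] a that by (auto simp: dl_def)
  have dI: "dl (b \<alpha> s) (\<beta>,r) = (if \<alpha> = \<beta> \<and> s = r then 1 else 0)" if "s \<le> n \<alpha>" "\<beta> \<le> g" "0 < r" "r < n \<beta>" for s \<beta> r
    using b_eq_int[of \<alpha> s r \<beta>] a that by (auto simp: dl_def)
  have "\<forall>x\<in>V. dl (b \<alpha> p') x + dl (b \<alpha> q') x = (dl (b \<alpha> p) x + dl (b \<alpha> q) x) - lap f x"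
  proof
    fix x assume "x \<in> V"
    then consider "x = NN" | "x = SS" | \<beta> r where "x = (\<beta>,r)" "\<beta> \<le> g" "0 < r" "r < n \<beta>"
      using V_cases by blast
    then show "dl (b \<alpha> p') x + dl (b \<alpha> q') x = (dl (b \<alpha> p) x + dl (b \<alpha> q) x) - lap f x"
    proof cases
      case 1
      have "lap f NN = (\<Sum>\<beta>\<le>g. if \<beta> = \<alpha> then - H 1 else 0)"
        unfolding lap_N using fb npos by (intro sum.cong refl) (auto simp: f_def)
      also have "\<dots> = - H 1" using a by simp
      finally show ?thesis using 1 a by (simp add: dN H_def min1)
    next
      case 2
      have "lap f SS = (\<Sum>\<beta>\<le>g. if \<beta> = \<alpha> then - H (n \<alpha> - 1) else 0)"
        unfolding lap_S using fb npos NS_ne by (intro sum.cong refl) (auto simp: f_def)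
      also have "\<dots> = - H (n \<alpha> - 1)" using a by simp
      finally show ?thesis using 2 a npos[of \<alpha>] by (simp add: dS H_def minN)
    next
      case 3
      have "lap f x = (if \<beta> = \<alpha> then 2 * H r - H (r - 1) - H (Suc r) else 0)"
      proof -
        have "lap f x = 2 * f (b \<beta> r) - f (b \<beta> (r - 1)) - f (b \<beta> (Suc r))"
          using 3 lap_int by simp
        then show ?thesis using 3 by (simp add: fb)
      qed
      also have "\<dots> = (if \<beta> = \<alpha> then (if r = p then 1 else 0) + (if r = q then 1 else 0)
             - (if r = p' then 1 else 0) - (if r = q' then 1 else 0) else 0)"
        using 3 mins2[of r] by (simp add: H_def algebra_simps)
      finally show ?thesis using 3 a by (auto simp: dI)
    qed
  qed
  then show ?thesis unfolding lin_equiv_lap by blast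
qed

end


context ban begin

lemma sweep:
  assumes sJ: "shapeJ J" and t: "1 \<le> t" and tle: "\<forall>\<beta>\<le>g. t + J \<beta> \<le> n \<beta>"
  shows "lin_equiv V M (Div m (-1) J) (Div (m - int (card {\<beta>\<in>{..g}. J \<beta> = 0}))
           (int (card {\<beta>\<in>{..g}. t + J \<beta> = n \<beta>}) - 1) (\<lambda>\<beta>. if J \<beta> + t < n \<beta> then J \<beta> + t else 0))"
proof -
  define J' where "J' = (\<lambda>\<beta>. if J \<beta> + t < n \<beta> then J \<beta> + t else 0)"
  define f where "f y = (if y = NN then int t else if y = SS then 0 else
      if fst y \<le> g \<and> 0 < snd y \<and> snd y < n (fst y) then int (min t (t + J (fst y) - snd y)) else 0)" for y
  have npos': "0 < n \<beta>" if "\<beta> \<le> g" for \<beta> using npos[OF that] by simp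
  have sJ': "shapeJ J'" using npos' by (auto simp: shapeJ_def J'_def)
  have fb: "f (b \<beta> r) = int (min t (t + J \<beta> - r))" if rb: "\<beta> \<le> g" "r \<le> n \<beta>" for \<beta> r
  proof -
    consider "r = 0" | "r = n \<beta>" | "0 < r" "r < n \<beta>" using rb by (cases "r = 0"; cases "r = n \<beta>") auto
    then show ?thesis
    proof cases
      case 1 then show ?thesis by (simp add: f_def)
    next
      case 2 then show ?thesis using rb bn[of \<beta>] NS_ne tle by (auto simp: f_def)
    next
      case 3 then show ?thesis using rb by (auto simp: f_def bint)
    qed
  qed
  have "\<forall>x\<in>V. Div (m - int (card {\<beta>\<in>{..g}. J \<beta> = 0})) (int (card {\<beta>\<in>{..g}. t + J \<beta> = n \<beta>}) - 1) J' x
         = Div m (-1) J x - lap f x"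
  proof
    fix x assume "x \<in> V"
    then consider "x = NN" | "x = SS" | \<beta> r where "x = (\<beta>,r)" "\<beta> \<le> g" "0 < r" "r < n \<beta>"
      using V_cases by blast
    then show "Div (m - int (card {\<beta>\<in>{..g}. J \<beta> = 0})) (int (card {\<beta>\<in>{..g}. t + J \<beta> = n \<beta>}) - 1) J' x
         = Div m (-1) J x - lap f x"
    proof cases
      case 1
      have "lap f NN = (\<Sum>\<beta>\<le>g. if J \<beta> = 0 then 1 else 0)"
        unfolding lap_N
      proof (intro sum.cong refl)
        fix \<beta> assume "\<beta> \<in> {..g}"
        then have "f (b \<beta> 1) = int (min t (t + J \<beta> - 1))" using fb npos by simp
        then show "f NN - f (b \<beta> 1) = (if J \<beta> = 0 then 1 else 0)" using t by (auto simp: f_def min_def)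
      qed
      also have "\<dots> = int (card {\<beta>\<in>{..g}. J \<beta> = 0})" using card_sum_if[of "{..g}" "\<lambda>\<beta>. J \<beta> = 0"] by simp
      finally show ?thesis using 1 by (simp add: Div_N)
    next
      case 2
      have "lap f SS = - (\<Sum>\<beta>\<le>g. if t + J \<beta> = n \<beta> then 1 else 0)"
        unfolding lap_S sum_negf[symmetric]
      proof (intro sum.cong refl)
        fix \<beta> assume "\<beta> \<in> {..g}"
        then have "f (b \<beta> (n \<beta> - 1)) = int (min t (t + J \<beta> - (n \<beta> - 1)))" using fb by simp
        moreover have "t + J \<beta> \<le> n \<beta>" "1 \<le> n \<beta>" using tle npos \<open>\<beta> \<in> {..g}\<close> by auto
        ultimately show "f SS - f (b \<beta> (n \<beta> - 1)) = - (if t + J \<beta> = n \<beta> then 1 else 0)"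
          using t NS_ne by (auto simp: f_def min_def)
      qed
      also have "\<dots> = - int (card {\<beta>\<in>{..g}. t + J \<beta> = n \<beta>})" using card_sum_if[of "{..g}" "\<lambda>\<beta>. t + J \<beta> = n \<beta>"] by simp
      finally show ?thesis using 2 sJ sJ' by (simp add: Div_S)
    next
      case 3
      have "lap f x = 2 * f (b \<beta> r) - f (b \<beta> (r - 1)) - f (b \<beta> (Suc r))"
        using 3 lap_int by simp
      also have "\<dots> = (if r = J \<beta> then 1 else 0) - (if r = J \<beta> + t then 1 else 0)"
        using 3 sw_arith[of r t "J \<beta>"] t by (simp add: fb)
      finally show ?thesis using 3 by (auto simp: Div_int J'_def)
    qed
  qed
  then show ?thesis unfolding lin_equiv_lap J'_def by blast
qed

lemma card_part: "card {\<beta>\<in>{..g}. P \<beta>} + card {\<beta>\<in>{..g}. \<not> P \<beta>} = Suc g"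
proof -
  have "card ({\<beta>\<in>{..g}. P \<beta>} \<union> {\<beta>\<in>{..g}. \<not> P \<beta>}) = card {\<beta>\<in>{..g}. P \<beta>} + card {\<beta>\<in>{..g}. \<not> P \<beta>}"
    by (rule card_Un_disjoint) auto
  moreover have "{\<beta>\<in>{..g}. P \<beta>} \<union> {\<beta>\<in>{..g}. \<not> P \<beta>} = {..g}" by auto
  ultimately show ?thesis by simp
qed

lemma sweep_shape:
  assumes sJ: "shapeJ J"
  shows "\<exists>m' c' J'. shape J' c' \<and> lin_equiv V M (Div m (-1) J) (Div m' c' J')"
proof -
  define t where "t = Min ((\<lambda>\<beta>. n \<beta> - J \<beta>) ` {..g})"
  have fin: "finite ((\<lambda>\<beta>. n \<beta> - J \<beta>) ` {..g})" by simp
  have ne: "(\<lambda>\<beta>. n \<beta> - J \<beta>) ` {..g} \<noteq> {}" by simp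
  have tle: "\<forall>\<beta>\<le>g. t + J \<beta> \<le> n \<beta>"
  proof (intro allI impI)
    fix \<beta> assume "\<beta> \<le> g"
    then have "t \<le> n \<beta> - J \<beta>" unfolding t_def by (intro Min_le) auto
    moreover have "J \<beta> < n \<beta>" using sJ \<open>\<beta> \<le> g\<close> by (simp add: shapeJ_def)
    ultimately show "t + J \<beta> \<le> n \<beta>" by arith
  qed
  have "t \<in> (\<lambda>\<beta>. n \<beta> - J \<beta>) ` {..g}" unfolding t_def using fin ne by (rule Min_in)
  then obtain \<beta>0 where b0: "\<beta>0 \<le> g" "t = n \<beta>0 - J \<beta>0" by auto
  have t1: "1 \<le> t" using b0 sJ by (auto simp: shapeJ_def)
  have b0': "t + J \<beta>0 = n \<beta>0" using b0 sJ by (auto simp: shapeJ_def)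
  define J' where "J' = (\<lambda>\<beta>. if J \<beta> + t < n \<beta> then J \<beta> + t else 0)"
  define r where "r = card {\<beta>\<in>{..g}. t + J \<beta> = n \<beta>}"
  have "{\<beta>\<in>{..g}. t + J \<beta> = n \<beta>} \<noteq> {}" using b0 b0' by auto
  then have r1: "1 \<le> r" unfolding r_def by (simp add: card_gt_0_iff Suc_le_eq)
  have npos': "0 < n \<beta>" if "\<beta> \<le> g" for \<beta> using npos[OF that] by simp
  have "occ J' = card {\<beta>\<in>{..g}. \<not> (t + J \<beta> = n \<beta>)}"
    unfolding occ_def J'_def
  proof (rule arg_cong[where f=card])
    show "{\<beta> \<in> {..g}. 0 < (if J \<beta> + t < n \<beta> then J \<beta> + t else 0)} = {\<beta> \<in> {..g}. t + J \<beta> \<noteq> n \<beta>}"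
      using tle t1 by fastforce
  qed
  then have occ': "r + occ J' = Suc g" unfolding r_def using card_part[of "\<lambda>\<beta>. t + J \<beta> = n \<beta>"] by simp
  have sh: "shape J' (int r - 1)" unfolding shape_def using occ' r1 npos'
    by (auto simp: shapeJ_def J'_def)
  show ?thesis using sweep[OF sJ t1 tle, of m] sh unfolding J'_def r_def by blast
qed

end


context ban begin

lemma Div_m: "Div m c J y = Div (m-1) c J y + dl NN y"
  by (simp add: Div_def dl_def)
lemma Div_c: "Div m c J y = Div m (c-1) J y + dl SS y"
  by (simp add: Div_def dl_def)
lemma Div_split: "\<alpha> \<le> g \<Longrightarrow> 0 < J \<alpha> \<Longrightarrow> Div m c J y = Div m c (J(\<alpha>:=0)) y + dl (\<alpha>, J \<alpha>) y"
  by (cases y) (auto simp: Div_def dl_def chip_def)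

lemma occ_0: assumes "\<alpha> \<le> g" "0 < J \<alpha>" shows "occ (J(\<alpha>:=0)) + 1 = occ J"
proof -
  have "{\<beta>\<in>{..g}. 0 < J \<beta>} = insert \<alpha> {\<beta>\<in>{..g}. 0 < (J(\<alpha>:=0)) \<beta>}" using assms by auto
  moreover have "\<alpha> \<notin> {\<beta>\<in>{..g}. 0 < (J(\<alpha>:=0)) \<beta>}" by simp
  ultimately show ?thesis unfolding occ_def by simp
qed

lemma occ_pos: assumes "\<alpha> \<le> g" "0 < J \<alpha>" "0 < k" shows "occ (J(\<alpha>:=k)) = occ J"
proof -
  have "{\<beta>\<in>{..g}. 0 < (J(\<alpha>:=k)) \<beta>} = {\<beta>\<in>{..g}. 0 < J \<beta>}" using assms by auto
  then show ?thesis unfolding occ_def by simp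
qed

lemma occ_new: assumes "\<alpha> \<le> g" "J \<alpha> = 0" "0 < k" shows "occ (J(\<alpha>:=k)) = occ J + 1"
proof -
  have "{\<beta>\<in>{..g}. 0 < (J(\<alpha>:=k)) \<beta>} = insert \<alpha> {\<beta>\<in>{..g}. 0 < J \<beta>}" using assms by auto
  moreover have "\<alpha> \<notin> {\<beta>\<in>{..g}. 0 < J \<beta>}" using assms by simp
  ultimately show ?thesis unfolding occ_def by simp
qed

lemma shapeJ_upd: "shapeJ J \<Longrightarrow> k < n \<alpha> \<Longrightarrow> shapeJ (J(\<alpha>:=k))"
  by (auto simp: shapeJ_def)

lemma step_pair:
  assumes a: "\<alpha> \<le> g" "p + q = p' + q'" "p \<le> n \<alpha>" "q \<le> n \<alpha>" "p' \<le> n \<alpha>" "q' \<le> n \<alpha>"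
    and e1: "\<And>y. D y = R y + dl (b \<alpha> p) y + dl (b \<alpha> q) y"
    and e2: "\<And>y. D' y = R y + dl (b \<alpha> p') y + dl (b \<alpha> q') y"
  shows "lin_equiv V M D D'"
proof -
  have "lin_equiv V M (\<lambda>x. R x + (dl (b \<alpha> p) x + dl (b \<alpha> q) x)) (\<lambda>x. R x + (dl (b \<alpha> p') x + dl (b \<alpha> q') x))"
    using le_add[OF le_refl[of R] pair_move[OF a]] .
  then show ?thesis by (rule le_cong) (simp_all add: e1 e2 add.assoc)
qed

lemma ex_step: "shape J' c' \<Longrightarrow> lin_equiv V M D (Div m' c' J') \<Longrightarrow> (0 < c \<longrightarrow> m-1 \<le> m' \<and> c-1 \<le> c') \<Longrightarrow>
  \<exists>m' c' J'. shape J' c' \<and> lin_equiv V M D (Div m' c' J') \<and> (0 < c \<longrightarrow> m - 1 \<le> m' \<and> c - 1 \<le> c')"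
  by blast

lemma step:
  assumes sh: "shape J c" and x: "x \<in> V"
  shows "\<exists>m' c' J'. shape J' c' \<and> lin_equiv V M (\<lambda>y. Div m c J y - dl x y) (Div m' c' J')
          \<and> (0 < c \<longrightarrow> m - 1 \<le> m' \<and> c - 1 \<le> c')"
proof -
  have sJ: "shapeJ J" and c0: "0 \<le> c" and co: "c + int (occ J) \<le> int g" using sh by (auto simp: shape_def)
  consider "x = NN" | "x = SS" | \<alpha> i where "x = (\<alpha>,i)" "\<alpha> \<le> g" "0 < i" "i < n \<alpha>"
    using V_cases[OF x] by blast
  then show ?thesis
  proof cases
    case 1
    have "lin_equiv V M (\<lambda>y. Div m c J y - dl x y) (Div (m-1) c J)"
      using le_refl by (rule le_cong) (use 1 Div_m[of m c J] in simp)+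
    then show ?thesis by (intro ex_step[OF sh]) auto
  next
    case 2
    show ?thesis
    proof (cases "c = 0")
      case True
      have e: "lin_equiv V M (\<lambda>y. Div m c J y - dl x y) (Div m (-1) J)"
        using le_refl by (rule le_cong) (use 2 True Div_c[of m 0] in simp)+
      obtain m' c' J' where s1: "shape J' c'" and s2: "lin_equiv V M (Div m (-1) J) (Div m' c' J')"
        using sweep_shape[OF sJ] by blast
      show ?thesis by (intro ex_step[OF s1 le_trans[OF e s2]]) (simp add: True)
    next
      case False
      have "lin_equiv V M (\<lambda>y. Div m c J y - dl x y) (Div m (c-1) J)"
        using le_refl by (rule le_cong) (use 2 Div_c[of m c J] in simp)+
      moreover have "shape J (c-1)" using sh False by (auto simp: shape_def)
      ultimately show ?thesis by (intro ex_step) auto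
    qed
  next
    case 3
    note a = 3(2-4) and xa = 3(1)
    have na: "1 \<le> n \<alpha>" using npos a by simp
    have bi: "b \<alpha> i = (\<alpha>,i)" using a bint by simp
    have bN: "b \<alpha> (n \<alpha>) = SS" using a bn by simp
    define j where "j = J \<alpha>"
    have jn: "j < n \<alpha>" using sJ a by (simp add: shapeJ_def j_def)
    consider "j = i" | "i < j" | "0 < j" "j < i" | "j = 0" by linarith
    then show ?thesis
    proof cases
      case 1
      have "lin_equiv V M (\<lambda>y. Div m c J y - dl x y) (Div m c (J(\<alpha>:=0)))"
        using le_refl by (rule le_cong) (use 3 1 a Div_split[of \<alpha> J m c] in \<open>simp add: j_def\<close>)+
      moreover have "shape (J(\<alpha>:=0)) c" using sh occ_0[of \<alpha> J] a 1 shapeJ_upd[OF sJ, of 0 \<alpha>] na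
        by (auto simp: shape_def j_def)
      ultimately show ?thesis by (intro ex_step) auto
    next
      case 2
      have bj: "b \<alpha> j = (\<alpha>,j)" "b \<alpha> (j-i) = (\<alpha>,j-i)" using a 2 jn bint by auto
      have "lin_equiv V M (\<lambda>y. Div m c J y - dl x y) (Div (m-1) c (J(\<alpha>:=j-i)))"
      proof (rule step_pair[of \<alpha> 0 j i "j-i" _ "\<lambda>y. Div (m-1) c (J(\<alpha>:=0)) y - dl (\<alpha>,i) y"])
        show "\<alpha> \<le> g" "0 + j = i + (j - i)" "0 \<le> n \<alpha>" "j \<le> n \<alpha>" "i \<le> n \<alpha>" "j - i \<le> n \<alpha>"
          using a 2 jn by auto
      next
        fix y show "Div m c J y - dl x y = Div (m - 1) c (J(\<alpha> := 0)) y - dl (\<alpha>, i) y + dl (b \<alpha> 0) y + dl (b \<alpha> j) y"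
          using Div_m[of m c J y] Div_split[of \<alpha> J "m-1" c y] a 2 xa bj by (simp add: j_def)
      next
        fix y show "Div (m - 1) c (J(\<alpha> := j - i)) y = Div (m - 1) c (J(\<alpha> := 0)) y - dl (\<alpha>, i) y + dl (b \<alpha> i) y + dl (b \<alpha> (j - i)) y"
          using Div_split[of \<alpha> "J(\<alpha> := j - i)" "m-1" c y] a 2 bj bi by simp
      qed
      moreover have "shape (J(\<alpha>:=j-i)) c" using sh occ_pos[of \<alpha> J "j-i"] a 2 shapeJ_upd[OF sJ, of "j-i" \<alpha>] jn
        by (auto simp: shape_def j_def)
      ultimately show ?thesis by (intro ex_step) auto
    next
      case 3 note 4 = 3
      define k where "k = j + n \<alpha> - i"
      have kk: "0 < k" "k < n \<alpha>" using 4 a unfolding k_def by auto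
      have bj: "b \<alpha> j = (\<alpha>,j)" "b \<alpha> k = (\<alpha>,k)" using a 4 kk jn bint by auto
      have e: "lin_equiv V M (\<lambda>y. Div m c J y - dl x y) (Div m (c-1) (J(\<alpha>:=k)))"
      proof (rule step_pair[of \<alpha> j "n \<alpha>" i k _ "\<lambda>y. Div m (c-1) (J(\<alpha>:=0)) y - dl (\<alpha>,i) y"])
        show "\<alpha> \<le> g" "j + n \<alpha> = i + k" "j \<le> n \<alpha>" "n \<alpha> \<le> n \<alpha>" "i \<le> n \<alpha>" "k \<le> n \<alpha>"
          using a 4 jn kk unfolding k_def by auto
      next
        fix y show "Div m c J y - dl x y = Div m (c-1) (J(\<alpha> := 0)) y - dl (\<alpha>, i) y + dl (b \<alpha> j) y + dl (b \<alpha> (n \<alpha>)) y"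
          using Div_c[of m c J y] Div_split[of \<alpha> J m "c-1" y] a 4 xa bj bN by (simp add: j_def)
      next
        fix y show "Div m (c-1) (J(\<alpha> := k)) y = Div m (c-1) (J(\<alpha> := 0)) y - dl (\<alpha>, i) y + dl (b \<alpha> i) y + dl (b \<alpha> k) y"
          using Div_split[of \<alpha> "J(\<alpha> := k)" m "c-1" y] a kk bj bi by simp
      qed
      have sJk: "shapeJ (J(\<alpha>:=k))" using shapeJ_upd[OF sJ kk(2)] .
      have ok: "occ (J(\<alpha>:=k)) = occ J" using occ_pos[of \<alpha> J k] a 4 kk by (simp add: j_def)
      show ?thesis
      proof (cases "c = 0")
        case True
        obtain m' c' J' where s1: "shape J' c'" and s2: "lin_equiv V M (Div m (-1) (J(\<alpha>:=k))) (Div m' c' J')"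
          using sweep_shape[OF sJk] by blast
        show ?thesis by (intro ex_step[OF s1 le_trans[OF _ s2]]) (use e True in simp_all)
      next
        case False
        have "shape (J(\<alpha>:=k)) (c-1)" using sh ok sJk False by (auto simp: shape_def)
        then show ?thesis using e by (intro ex_step) auto
      qed
    next
      case 4 note 5 = 4
      define k where "k = n \<alpha> - i"
      have kk: "0 < k" "k < n \<alpha>" using a unfolding k_def by auto
      have bj: "b \<alpha> k = (\<alpha>,k)" using a kk bint by auto
      have e: "lin_equiv V M (\<lambda>y. Div m c J y - dl x y) (Div (m-1) (c-1) (J(\<alpha>:=k)))"
      proof (rule step_pair[of \<alpha> 0 "n \<alpha>" i k _ "\<lambda>y. Div (m-1) (c-1) J y - dl (\<alpha>,i) y"])
        show "\<alpha> \<le> g" "0 + n \<alpha> = i + k" "0 \<le> n \<alpha>" "n \<alpha> \<le> n \<alpha>" "i \<le> n \<alpha>" "k \<le> n \<alpha>"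
          using a kk unfolding k_def by auto
      next
        fix y show "Div m c J y - dl x y = Div (m-1) (c-1) J y - dl (\<alpha>, i) y + dl (b \<alpha> 0) y + dl (b \<alpha> (n \<alpha>)) y"
          using Div_c[of "m-1" c J y] Div_m[of m c J y] xa bN by simp
      next
        have J0: "(J(\<alpha> := k))(\<alpha> := 0) = J" using 5 by (auto simp: j_def)
        fix y show "Div (m-1) (c-1) (J(\<alpha> := k)) y = Div (m-1) (c-1) J y - dl (\<alpha>, i) y + dl (b \<alpha> i) y + dl (b \<alpha> k) y"
          using Div_split[of \<alpha> "J(\<alpha> := k)" "m-1" "c-1" y] a kk bj bi J0 by simp
      qed
      have sJk: "shapeJ (J(\<alpha>:=k))" using shapeJ_upd[OF sJ kk(2)] .
      have ok: "occ (J(\<alpha>:=k)) = occ J + 1" using occ_new[of \<alpha> J k] a 5 kk by (simp add: j_def)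
      show ?thesis
      proof (cases "c = 0")
        case True
        obtain m' c' J' where s1: "shape J' c'" and s2: "lin_equiv V M (Div (m-1) (-1) (J(\<alpha>:=k))) (Div m' c' J')"
          using sweep_shape[OF sJk] by blast
        show ?thesis by (intro ex_step[OF s1 le_trans[OF _ s2]]) (use e True in simp_all)
      next
        case False
        have "shape (J(\<alpha>:=k)) (c-1)" using sh ok sJk False by (auto simp: shape_def)
        then show ?thesis using e by (intro ex_step) auto
      qed
    qed
  qed
qed

end



lemma dhar_general:
  fixes V :: "'v set" and m :: "'v \<Rightarrow> 'v \<Rightarrow> nat"
  assumes fin: "finite V" and q: "q \<in> V" "D q < 0"
    and burn: "\<And>A. A \<subseteq> V - {q} \<Longrightarrow> A \<noteq> {} \<Longrightarrow> \<exists>x\<in>A. D x < (\<Sum>y\<in>V - A. int (m x y))"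
    and le: "lin_equiv V m D D'"
  shows "\<not> effective V D'"
proof
  assume eff: "effective V D'"
  from le obtain f where f: "\<forall>x\<in>V. D' x = D x - (\<Sum>y\<in>V. int (m x y) * (f x - f y))"
    unfolding lin_equiv_def by blast
  define Mx where "Mx = Max (f ` V)"
  define A where "A = {x\<in>V. f x = Mx}"
  have ne: "V \<noteq> {}" using q by auto
  have fle: "f y \<le> Mx" if "y \<in> V" for y unfolding Mx_def using fin that by simp
  have "Mx \<in> f ` V" unfolding Mx_def using fin ne by (intro Max_in) auto
  then have Ane: "A \<noteq> {}" unfolding A_def by auto
  have AV: "A \<subseteq> V" unfolding A_def by auto
  have key: "D' x \<le> D x - (\<Sum>y\<in>V - A. int (m x y))" if "x \<in> A" for x
  proof -
    have xV: "x \<in> V" and fx: "f x = Mx" using that by (auto simp: A_def)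
    have "(\<Sum>y\<in>V - A. int (m x y)) \<le> (\<Sum>y\<in>V - A. int (m x y) * (f x - f y))"
    proof (rule sum_mono)
      fix y assume "y \<in> V - A"
      then have "f y < Mx" using fle by (auto simp: A_def order.order_iff_strict)
      then have "1 \<le> f x - f y" using fx by simp
      then show "int (m x y) \<le> int (m x y) * (f x - f y)"
        using mult_left_mono[of 1 "f x - f y" "int (m x y)"] by simp
    qed
    also have "\<dots> \<le> (\<Sum>y\<in>V. int (m x y) * (f x - f y))"
    proof (rule sum_mono2[OF fin])
      show "V - A \<subseteq> V" by auto
      fix y assume "y \<in> V - (V - A)"
      then show "0 \<le> int (m x y) * (f x - f y)" using fle fx by simp
    qed
    finally show ?thesis using f xV by simp
  qed
  show False
  proof (cases "q \<in> A")
    case True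
    then have "D' q < 0" using key[OF True] q sum_nonneg[of "V - A" "\<lambda>y. int (m q y)"] by simp
    then show False using eff q unfolding effective_def by force
  next
    case False
    then have "A \<subseteq> V - {q}" using AV by auto
    then obtain x where "x \<in> A" "D x < (\<Sum>y\<in>V - A. int (m x y))" using burn Ane by blast
    then have "D' x < 0" using key by force
    then show False using eff \<open>x \<in> A\<close> AV unfolding effective_def by force
  qed
qed

context ban begin

lemma eff_zero: "effective V E' \<Longrightarrow> deg V E' = 0 \<Longrightarrow> x \<in> V \<Longrightarrow> E' x = 0"
  unfolding effective_def deg_def using sum_nonneg_eq_0_iff[OF finite_V] by blast

lemma eff_pos: "effective V E' \<Longrightarrow> deg V E' > 0 \<Longrightarrow> \<exists>x\<in>V. E' x > 0"
proof (rule ccontr)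
  assume e: "effective V E'" "deg V E' > 0" "\<not> (\<exists>x\<in>V. E' x > 0)"
  then have "\<forall>x\<in>V. E' x = 0" unfolding effective_def by force
  then have "deg V E' = 0" unfolding deg_def by simp
  then show False using e by simp
qed

lemma iter:
  assumes "shape J c" "effective V E'" "deg V E' = int t"
  shows "\<exists>m' c' J'. shape J' c' \<and> lin_equiv V M (\<lambda>x. Div m c J x - E' x) (Div m' c' J')
          \<and> (int t \<le> c \<longrightarrow> m - int t \<le> m' \<and> c - int t \<le> c')"
  using assms(2,3)
proof (induction t arbitrary: E')
  case 0
  have "lin_equiv V M (\<lambda>x. Div m c J x - E' x) (Div m c J)"
    using le_refl by (rule le_cong) (use eff_zero[OF 0(1,2)[simplified]] in simp)+
  then show ?case using assms(1) by auto
next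
  case (Suc t)
  obtain x where x: "x \<in> V" "E' x > 0" using eff_pos[OF Suc.prems(1)] Suc.prems(2) by auto
  define E'' where "E'' y = E' y - dl x y" for y
  have eff'': "effective V E''" using Suc.prems(1) x by (auto simp: effective_def E''_def dl_def)
  have deg'': "deg V E'' = int t"
  proof -
    have "deg V E'' = deg V E' - deg V (dl x)" unfolding E''_def by (rule deg_diff)
    then show ?thesis using Suc.prems(2) deg_dl[OF x(1)] by simp
  qed
  obtain m1 c1 J1 where h1: "shape J1 c1" "lin_equiv V M (\<lambda>y. Div m c J y - E'' y) (Div m1 c1 J1)"
      "int t \<le> c \<longrightarrow> m - int t \<le> m1 \<and> c - int t \<le> c1"
    using Suc.IH[OF eff'' deg''] by blast
  obtain m2 c2 J2 where h2: "shape J2 c2" "lin_equiv V M (\<lambda>y. Div m1 c1 J1 y - dl x y) (Div m2 c2 J2)"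
      "0 < c1 \<longrightarrow> m1 - 1 \<le> m2 \<and> c1 - 1 \<le> c2"
    using step[OF h1(1) x(1), of m1] by blast
  have e1: "lin_equiv V M (\<lambda>y. Div m c J y - E' y) (\<lambda>y. Div m1 c1 J1 y - dl x y)"
    using le_sub_dl[OF h1(2), of x] by (simp add: E''_def algebra_simps)
  have "lin_equiv V M (\<lambda>y. Div m c J y - E' y) (Div m2 c2 J2)" using le_trans[OF e1 h2(2)] .
  moreover have "int (Suc t) \<le> c \<longrightarrow> m - int (Suc t) \<le> m2 \<and> c - int (Suc t) \<le> c2"
    using h1(3) h2(3) by auto
  ultimately show ?case using h2(1) by blast
qed

lemma lower:
  assumes sh: "shape J c" and a: "0 \<le> a"
    and r: "int r \<le> min a c \<or> int r \<le> a + c + int (occ J) - int g"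
  shows "rank_ge V M (Div a c J) r"
  unfolding rank_ge_def
proof (intro allI impI, elim conjE)
  fix E' assume eff: "effective V E'" and d: "deg V E' = int r"
  obtain m' c' J' where h: "shape J' c'" "lin_equiv V M (\<lambda>x. Div a c J x - E' x) (Div m' c' J')"
      "int r \<le> c \<longrightarrow> a - int r \<le> m' \<and> c - int r \<le> c'"
    using iter[OF sh eff d] by blast
  have sJ: "shapeJ J" "shapeJ J'" using sh h(1) by (auto simp: shape_def)
  have "deg V (Div m' c' J') = deg V (\<lambda>x. Div a c J x - E' x)" by (rule deg_equiv[OF h(2)])
  also have "\<dots> = a + c + int (occ J) - int r" using deg_diff[of "Div a c J" E' ] deg_Div[OF sJ(1)] d by simp
  finally have dd: "m' + c' + int (occ J') = a + c + int (occ J) - int r" using deg_Div[OF sJ(2)] by simp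
  have "0 \<le> m'" "0 \<le> c'"
  proof -
    show "0 \<le> c'" using h(1) by (simp add: shape_def)
    show "0 \<le> m'" using r h(3) h(1) dd by (auto simp: shape_def)
  qed
  then show "\<exists>D'. lin_equiv V M (\<lambda>x. Div a c J x - E' x) D' \<and> effective V D'"
    using h(2) effective_Div by blast
qed

end


context ban begin

definition out :: "(nat \<times> nat) set \<Rightarrow> nat \<times> nat \<Rightarrow> int" where
  "out A x = (\<Sum>y\<in>V - A. int (M x y))"

lemma out_alt: "out A x = (\<Sum>y\<in>V. int (M x y) * (if y \<in> A then 0 else 1))"
proof -
  have "V - A = {y\<in>V. y \<notin> A}" by auto
  moreover have "(\<Sum>y\<in>V. int (M x y) * (if y \<in> A then 0 else 1)) = (\<Sum>y\<in>V. if y \<notin> A then int (M x y) else 0)"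
    by (intro sum.cong) auto
  ultimately show ?thesis unfolding out_def using sum.inter_filter[OF finite_V, of "\<lambda>y. int (M x y)" "\<lambda>y. y \<notin> A"]
    by simp
qed

lemma out_int: "\<alpha> \<le> g \<Longrightarrow> 0 < p \<Longrightarrow> p < n \<alpha> \<Longrightarrow>
  out A (\<alpha>,p) = (if b \<alpha> (p - 1) \<in> A then 0 else 1) + (if b \<alpha> (Suc p) \<in> A then 0 else 1)"
  unfolding out_alt by (rule NB_int)

lemma out_N: "out A NN = (\<Sum>\<beta>\<le>g. if b \<beta> 1 \<in> A then 0 else 1)"
  unfolding out_alt by (rule NB_N)

lemma out_S: "out A SS = (\<Sum>\<beta>\<le>g. if b \<beta> (n \<beta> - 1) \<in> A then 0 else 1)"
  unfolding out_alt by (rule NB_S)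

context
  fixes A J m c
  assumes H: "\<forall>x\<in>A. out A x \<le> Div m c J x"
begin

lemma down: "(\<alpha>,p) \<in> A \<Longrightarrow> \<alpha> \<le> g \<Longrightarrow> 0 < p \<Longrightarrow> p < n \<alpha> \<Longrightarrow> (\<forall>r. 0 < r \<longrightarrow> r \<le> p \<longrightarrow> J \<alpha> \<noteq> r) \<Longrightarrow> NN \<in> A"
proof (induction p)
  case 0 then show ?case by simp
next
  case (Suc p)
  have "out A (\<alpha>, Suc p) \<le> Div m c J (\<alpha>, Suc p)" using H Suc.prems(1) by blast
  also have "\<dots> = 0" using Suc.prems by (simp add: Div_int)
  finally have "b \<alpha> p \<in> A" using out_int[of \<alpha> "Suc p" A] Suc.prems by (auto split: if_splits)
  show ?case
  proof (cases "p = 0")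
    case True then show ?thesis using \<open>b \<alpha> p \<in> A\<close> by simp
  next
    case False
    then have "(\<alpha>,p) \<in> A" using \<open>b \<alpha> p \<in> A\<close> bint[of p \<alpha>] Suc.prems by simp
    then show ?thesis using Suc.IH Suc.prems False by simp
  qed
qed

lemma up: "(\<alpha>,p) \<in> A \<Longrightarrow> \<alpha> \<le> g \<Longrightarrow> 0 < p \<Longrightarrow> p < n \<alpha> \<Longrightarrow> (\<forall>r. p \<le> r \<longrightarrow> r < n \<alpha> \<longrightarrow> J \<alpha> \<noteq> r) \<Longrightarrow> SS \<in> A"
proof (induction "n \<alpha> - p" arbitrary: p)
  case 0 then show ?case by simp
next
  case (Suc k)
  have "out A (\<alpha>, p) \<le> Div m c J (\<alpha>, p)" using H Suc.prems(1) by blast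
  also have "\<dots> = 0" using Suc.prems by (simp add: Div_int)
  finally have bA: "b \<alpha> (Suc p) \<in> A" using out_int[of \<alpha> p A] Suc.prems by (auto split: if_splits)
  show ?case
  proof (cases "Suc p = n \<alpha>")
    case True then show ?thesis using bA bn[of \<alpha>] Suc.prems by simp
  next
    case False
    then have "(\<alpha>,Suc p) \<in> A" using bA bint[of "Suc p" \<alpha>] Suc.prems by simp
    then show ?thesis using Suc.hyps(1)[of "Suc p"] Suc.hyps(2) Suc.prems False by simp
  qed
qed

lemma int_free: "(\<alpha>,p) \<in> A \<Longrightarrow> \<alpha> \<le> g \<Longrightarrow> 0 < p \<Longrightarrow> p < n \<alpha> \<Longrightarrow> J \<alpha> = 0 \<Longrightarrow> NN \<in> A \<and> SS \<in> A"
  using down[of \<alpha> p] up[of \<alpha> p] by auto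

lemma int_any: assumes "(\<alpha>,p) \<in> A" "\<alpha> \<le> g" "0 < p" "p < n \<alpha>" "shapeJ J" shows "NN \<in> A \<or> SS \<in> A"
proof -
  consider "p < J \<alpha>" | "J \<alpha> < p" | "J \<alpha> = p" by linarith
  then show ?thesis
  proof cases
    case 1 then show ?thesis using down[of \<alpha> p] assms by auto
  next
    case 2 then show ?thesis using up[of \<alpha> p] assms by auto
  next
    case 3
    have "out A (\<alpha>, p) \<le> Div m c J (\<alpha>, p)" using H assms(1) by blast
    also have "\<dots> = 1" using assms 3 by (simp add: Div_int)
    finally have "b \<alpha> (p - 1) \<in> A \<or> b \<alpha> (Suc p) \<in> A" using out_int[of \<alpha> p A] assms by (auto split: if_splits)
    then show ?thesis
    proof
      assume h: "b \<alpha> (p - 1) \<in> A"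
      show ?thesis
      proof (cases "p = 1")
        case True then show ?thesis using h by simp
      next
        case False
        then have "(\<alpha>, p - 1) \<in> A" using h bint[of "p - 1" \<alpha>] assms by simp
        moreover have "\<forall>r. 0 < r \<longrightarrow> r \<le> p - 1 \<longrightarrow> J \<alpha> \<noteq> r" using 3 by auto
        moreover have "p - 1 < n \<alpha>" "0 < p - 1" using assms False by auto
        ultimately show ?thesis using down[of \<alpha> "p - 1"] assms by blast
      qed
    next
      assume h: "b \<alpha> (Suc p) \<in> A"
      show ?thesis
      proof (cases "Suc p = n \<alpha>")
        case True then show ?thesis using h bn[of \<alpha>] assms by simp
      next
        case False
        then have "(\<alpha>, Suc p) \<in> A" using h bint[of "Suc p" \<alpha>] assms by simp
        moreover have "\<forall>r. Suc p \<le> r \<longrightarrow> r < n \<alpha> \<longrightarrow> J \<alpha> \<noteq> r" using 3 by auto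
        moreover have "Suc p < n \<alpha>" using assms False by auto
        ultimately show ?thesis using up[of \<alpha> "Suc p"] assms by blast
      qed
    qed
  qed
qed

end

lemma card_free: "int (card {\<beta>\<in>{..g}. J \<beta> = 0}) = int g + 1 - int (occ J)"
proof -
  have "{\<beta>\<in>{..g}. \<not> J \<beta> = 0} = {\<beta>\<in>{..g}. 0 < J \<beta>}" by auto
  then show ?thesis using card_part[of "\<lambda>\<beta>. J \<beta> = 0"] unfolding occ_def by simp
qed

lemma burn_N:
  assumes sJ: "shapeJ J" and c: "c + int (occ J) \<le> int g"
    and A: "A \<subseteq> V - {NN}" "A \<noteq> {}"
  shows "\<exists>x\<in>A. Div m c J x < out A x"
proof (rule ccontr)
  assume "\<not> ?thesis"
  then have H: "\<forall>x\<in>A. out A x \<le> Div m c J x" by force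
  have NA: "NN \<notin> A" using A by auto
  have SA: "SS \<notin> A"
  proof
    assume SA: "SS \<in> A"
    have "(\<Sum>\<beta>\<le>g. if J \<beta> = 0 then 1 else 0) \<le> (\<Sum>\<beta>\<le>g. if b \<beta> (n \<beta> - 1) \<in> A then 0 else (1::int))"
    proof (rule sum_mono)
      fix \<beta> assume \<beta>: "\<beta> \<in> {..g}"
      show "(if J \<beta> = 0 then 1 else 0) \<le> (if b \<beta> (n \<beta> - 1) \<in> A then 0 else (1::int))"
      proof (cases "J \<beta> = 0 \<and> b \<beta> (n \<beta> - 1) \<in> A")
        case True
        show ?thesis
        proof (cases "n \<beta> - 1 = 0")
          case True2: True
          then show ?thesis using True NA by simp
        next
          case False
          then have "(\<beta>, n \<beta> - 1) \<in> A" using True bint[of "n \<beta> - 1" \<beta>] by simp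
          then have "NN \<in> A" using int_free[OF H, of \<beta> "n \<beta> - 1"] \<beta> True False by auto
          then show ?thesis using NA by simp
        qed
      qed auto
    qed
    also have "\<dots> = out A SS" by (simp add: out_S)
    also have "\<dots> \<le> Div m c J SS" using H SA by blast
    also have "\<dots> = c" using sJ by (simp add: Div_S)
    finally have "int (card {\<beta>\<in>{..g}. J \<beta> = 0}) \<le> c" using card_sum_if[of "{..g}" "\<lambda>\<beta>. J \<beta> = 0"] by simp
    then show False using card_free[of J] c by simp
  qed
  obtain x where x: "x \<in> A" using A by auto
  then have "x \<in> V" using A by auto
  then consider "x = NN" | "x = SS" | \<alpha> p where "x = (\<alpha>,p)" "\<alpha> \<le> g" "0 < p" "p < n \<alpha>"
    using V_cases by blast
  then show False
  proof cases
    case 3 then show False using int_any[OF H, of \<alpha> p] x NA SA sJ by auto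
  qed (use x NA SA in auto)
qed

lemma burn_S:
  assumes sJ: "shapeJ J" and c: "m + int (occ J) \<le> int g"
    and A: "A \<subseteq> V - {SS}" "A \<noteq> {}"
  shows "\<exists>x\<in>A. Div m c J x < out A x"
proof (rule ccontr)
  assume "\<not> ?thesis"
  then have H: "\<forall>x\<in>A. out A x \<le> Div m c J x" by force
  have SA: "SS \<notin> A" using A by auto
  have NA: "NN \<notin> A"
  proof
    assume NA: "NN \<in> A"
    have "(\<Sum>\<beta>\<le>g. if J \<beta> = 0 then 1 else 0) \<le> (\<Sum>\<beta>\<le>g. if b \<beta> 1 \<in> A then 0 else (1::int))"
    proof (rule sum_mono)
      fix \<beta> assume \<beta>: "\<beta> \<in> {..g}"
      show "(if J \<beta> = 0 then 1 else 0) \<le> (if b \<beta> 1 \<in> A then 0 else (1::int))"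
      proof (cases "J \<beta> = 0 \<and> b \<beta> 1 \<in> A")
        case True
        show ?thesis
        proof (cases "n \<beta> = 1")
          case True2: True
          then show ?thesis using True SA bn[of \<beta>] \<beta> by simp
        next
          case False
          then have "1 < n \<beta>" using npos[of \<beta>] \<beta> by simp
          then have "(\<beta>, 1) \<in> A" using True bint[of 1 \<beta>] by simp
          then have "SS \<in> A" using int_free[OF H, of \<beta> 1] \<beta> True \<open>1 < n \<beta>\<close> by auto
          then show ?thesis using SA by simp
        qed
      qed auto
    qed
    also have "\<dots> = out A NN" by (simp add: out_N)
    also have "\<dots> \<le> Div m c J NN" using H NA by blast
    also have "\<dots> = m" by (simp add: Div_N)
    finally have "int (card {\<beta>\<in>{..g}. J \<beta> = 0}) \<le> m" using card_sum_if[of "{..g}" "\<lambda>\<beta>. J \<beta> = 0"] by simp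
    then show False using card_free[of J] c by simp
  qed
  obtain x where x: "x \<in> A" using A by auto
  then have "x \<in> V" using A by auto
  then consider "x = NN" | "x = SS" | \<alpha> p where "x = (\<alpha>,p)" "\<alpha> \<le> g" "0 < p" "p < n \<alpha>"
    using V_cases by blast
  then show False
  proof cases
    case 3 then show False using int_any[OF H, of \<alpha> p] x NA SA sJ by auto
  qed (use x NA SA in auto)
qed

end


context ban begin

lemma not_rank:
  assumes sJ: "shapeJ J" and u: "0 \<le> u" and w: "0 \<le> w"
    and cases: "(aa - u < 0 \<and> bb - w + int (occ J) \<le> int g) \<or> (bb - w < 0 \<and> aa - u + int (occ J) \<le> int g)"
  shows "\<not> rank_ge V M (Div aa bb J) (nat (u + w))"
proof
  assume rg: "rank_ge V M (Div aa bb J) (nat (u + w))"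
  define E' where "E' x = u * dl NN x + w * dl SS x" for x
  have effE: "effective V E'" using u w by (simp add: effective_def E'_def dl_def)
  have "deg V E' = u * deg V (dl NN) + w * deg V (dl SS)"
    unfolding deg_def E'_def by (simp add: sum.distrib sum_distrib_left)
  then have dE: "deg V E' = int (nat (u + w))" using deg_dl[OF N_in_V] deg_dl[OF S_in_V] u w by simp
  obtain D' where D': "lin_equiv V M (\<lambda>x. Div aa bb J x - E' x) D'" "effective V D'"
    using rg effE dE unfolding rank_ge_def by blast
  have eq: "(\<lambda>x. Div aa bb J x - E' x) = Div (aa - u) (bb - w) J"
    using NS_ne by (auto simp: Div_def E'_def dl_def fun_eq_iff)
  have le: "lin_equiv V M (Div (aa - u) (bb - w) J) D'" using D'(1) unfolding eq .
  from cases show False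
  proof
    assume h: "aa - u < 0 \<and> bb - w + int (occ J) \<le> int g"
    have "\<not> effective V D'"
    proof (rule dhar_general[OF finite_V N_in_V _ _ le])
      show "Div (aa - u) (bb - w) J NN < 0" using h by (simp add: Div_N)
      fix A assume "A \<subseteq> V - {NN}" "A \<noteq> {}"
      then show "\<exists>x\<in>A. Div (aa - u) (bb - w) J x < (\<Sum>y\<in>V - A. int (M x y))"
        using burn_N[OF sJ, of "bb - w" A "aa - u"] h unfolding out_def by blast
    qed
    then show False using D'(2) by simp
  next
    assume h: "bb - w < 0 \<and> aa - u + int (occ J) \<le> int g"
    have "\<not> effective V D'"
    proof (rule dhar_general[OF finite_V S_in_V _ _ le])
      show "Div (aa - u) (bb - w) J SS < 0" using h sJ by (simp add: Div_S)
      fix A assume "A \<subseteq> V - {SS}" "A \<noteq> {}"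
      then show "\<exists>x\<in>A. Div (aa - u) (bb - w) J x < (\<Sum>y\<in>V - A. int (M x y))"
        using burn_S[OF sJ, of "aa - u" A "bb - w"] h unfolding out_def by blast
    qed
    then show False using D'(2) by simp
  qed
qed

lemma main_loc:
  fixes E :: "nat \<times> nat \<Rightarrow> int" and aa bb :: int
  assumes E_eff: "\<forall>x. E x \<ge> 0"
    and E_supp: "\<forall>x. E x \<noteq> 0 \<longrightarrow> x \<in> V \<and> x \<noteq> (0,0) \<and> x \<noteq> (0, n 0)"
    and E_strand: "\<forall>\<alpha>\<le>g. (\<Sum>i\<in>{0<..<n \<alpha>}. E (bvtx n \<alpha> i)) \<le> 1"
    and a0: "aa \<ge> 0" and b0: "0 \<le> bb" and ble: "bb \<le> int g - deg V E"
  shows "rank V M (\<lambda>x. (if x = (0,0) then aa else 0) + (if x = (0, n 0) then bb else 0) + E x)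
           = min aa bb + max 0 (max aa bb - (int g - deg V E))"
proof -
  have Es: "E (\<alpha>,i) \<le> 1" if "\<alpha> \<le> g" "0 < i" "i < n \<alpha>" for \<alpha> i
  proof -
    have "E (b \<alpha> i) \<le> (\<Sum>i\<in>{0<..<n \<alpha>}. E (b \<alpha> i))"
      by (rule member_le_sum) (use that in \<open>auto intro: E_eff[rule_format]\<close>)
    then show ?thesis using E_strand that bint by force
  qed
  have Eu: False if "\<alpha> \<le> g" "0 < i" "i < n \<alpha>" "0 < i'" "i' < n \<alpha>" "i \<noteq> i'" "E (\<alpha>,i) > 0" "E (\<alpha>,i') > 0" for \<alpha> i i'
  proof -
    have "(\<Sum>j\<in>{i,i'}. E (b \<alpha> j)) \<le> (\<Sum>j\<in>{0<..<n \<alpha>}. E (b \<alpha> j))"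
      by (rule sum_mono2) (use that in \<open>auto intro: E_eff[rule_format]\<close>)
    moreover have "(\<Sum>j\<in>{i,i'}. E (b \<alpha> j)) = E (\<alpha>,i) + E (\<alpha>,i')" using that bint by simp
    ultimately show False using E_strand that by force
  qed
  define P where "P \<alpha> i \<longleftrightarrow> 0 < i \<and> i < n \<alpha> \<and> E (\<alpha>,i) > 0" for \<alpha> i
  define J0 where "J0 \<alpha> = (if \<exists>i. P \<alpha> i then (SOME i. P \<alpha> i) else 0)" for \<alpha>
  have J0P: "P \<alpha> (J0 \<alpha>)" if "\<exists>i. P \<alpha> i" for \<alpha>
    using someI_ex[OF that] that by (simp add: J0_def)
  have sJ0: "shapeJ J0" unfolding shapeJ_def
  proof (intro allI impI)
    fix \<beta> assume "\<beta> \<le> g"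
    show "J0 \<beta> < n \<beta>"
    proof (cases "\<exists>i. P \<beta> i")
      case True then show ?thesis using J0P[OF True] by (simp add: P_def)
    next
      case False then show ?thesis using npos[OF \<open>\<beta> \<le> g\<close>] by (simp add: J0_def)
    qed
  qed
  have Echip: "E x = chip J0 x" for x
  proof (cases "E x = 0")
    case False
    then have xV: "x \<in> V" "x \<noteq> NN" "x \<noteq> SS" using E_supp[rule_format, of x] by auto
    then obtain \<beta> p where x: "x = (\<beta>,p)" "\<beta> \<le> g" "0 < p" "p < n \<beta>" using V_cases by blast
    have pos: "E x > 0" using False E_eff[rule_format, of x] by simp
    then have Pp: "P \<beta> p" using x by (simp add: P_def)
    then have PJ: "P \<beta> (J0 \<beta>)" using J0P by blast
    have "J0 \<beta> = p"
    proof (rule ccontr)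
      assume "J0 \<beta> \<noteq> p"
      then show False using Eu[of \<beta> "J0 \<beta>" p] PJ Pp x by (auto simp: P_def)
    qed
    moreover have "E x = 1" using Es[of \<beta> p] pos x by simp
    ultimately show ?thesis using x by (simp add: chip_int)
  next
    case True
    obtain \<beta> p where x: "x = (\<beta>,p)" by (cases x)
    show ?thesis
    proof (rule ccontr)
      assume "E x \<noteq> chip J0 x"
      then have c: "\<beta> \<le> g" "0 < p" "J0 \<beta> = p" using True x by (auto simp: chip_def split: if_splits)
      then have "\<exists>i. P \<beta> i" by (auto simp: J0_def split: if_splits)
      then have "P \<beta> (J0 \<beta>)" by (rule J0P)
      then show False using True x c by (simp add: P_def)
    qed
  qed
  define D where "D x = (if x = (0,0) then aa else 0) + (if x = (0, n 0) then bb else 0) + E x" for x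
  have Dform: "D = Div aa bb J0" by (auto simp: fun_eq_iff D_def Div_def Echip)
  have degE: "deg V E = int (occ J0)"
    unfolding deg_def using Echip sum_chip[OF sJ0] by simp
  define e where "e = int (occ J0)"
  define \<rho> where "\<rho> = min aa bb + max 0 (max aa bb - (int g - e))"
  have sh: "shape J0 bb" using sJ0 b0 ble degE by (simp add: shape_def)
  have rho0: "0 \<le> \<rho>" using a0 b0 by (simp add: \<rho>_def)
  have lowr: "rank_ge V M D r" if "int r \<le> \<rho>" for r
  proof -
    have "int r \<le> min aa bb \<or> int r \<le> aa + bb + int (occ J0) - int g"
      using that ble degE unfolding \<rho>_def e_def by (auto simp: min_def max_def split: if_splits)
    then show ?thesis unfolding Dform using lower[OF sh a0] by blast
  qed
  have upr: "int r \<le> \<rho>" if rg: "rank_ge V M D r" for r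
  proof (rule ccontr)
    assume gt: "\<not> int r \<le> \<rho>"
    have bk: "bb + e \<le> int g" using ble degE e_def by simp
    consider "aa + e \<le> int g" "aa \<le> bb" | "aa + e \<le> int g" "bb < aa" | "int g < aa + e" by linarith
    then show False
    proof cases
      case 1
      have "\<rho> = aa" using 1 bk unfolding \<rho>_def by (simp add: min_def max_def)
      then have "\<not> rank_ge V M (Div aa bb J0) (nat (int r + 0))"
        using not_rank[OF sJ0, of "int r" 0 aa bb] gt 1 bk e_def by simp
      then show False using rg Dform by simp
    next
      case 2
      have "\<rho> = bb" using 2 bk unfolding \<rho>_def by (simp add: min_def max_def)
      then have "\<not> rank_ge V M (Div aa bb J0) (nat (0 + int r))"
        using not_rank[OF sJ0, of 0 "int r" aa bb] gt 2 bk e_def by simp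
      then show False using rg Dform by simp
    next
      case 3
      define k where "k = int g - e"
      have "\<rho> = bb + aa - k" using 3 bk unfolding \<rho>_def k_def by (simp add: min_def max_def)
      then have "\<not> rank_ge V M (Div aa bb J0) (nat ((aa - k) + (int r - (aa - k))))"
        using not_rank[OF sJ0, of "aa - k" "int r - (aa - k)" aa bb] gt 3 bk e_def b0 unfolding k_def by simp
      then show False using rg Dform by simp
    qed
  qed
  have "rank V M D = \<rho>"
  proof -
    have r0: "rank_ge V M D 0" using lowr rho0 by simp
    have "(GREATEST r. rank_ge V M D r) = nat \<rho>"
    proof (rule Greatest_equality)
      show "rank_ge V M D (nat \<rho>)" using lowr rho0 by simp
      fix y assume "rank_ge V M D y"
      then show "y \<le> nat \<rho>" using upr by fastforce
    qed
    then show ?thesis unfolding rank_def using r0 rho0 by simp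
  qed
  then show ?thesis unfolding D_def \<rho>_def e_def degE .
qed

end



theorem mainTheorem14:
  fixes g :: nat and n :: "nat \<Rightarrow> nat" and E :: "nat \<times> nat \<Rightarrow> int" and a b :: int
  assumes n_pos: "\<forall>\<alpha>\<le>g. n \<alpha> \<ge> 1"
    and E_eff: "\<forall>x. E x \<ge> 0"
    and E_supp: "\<forall>x. E x \<noteq> 0 \<longrightarrow> x \<in> banana_V g n \<and> x \<noteq> (0,0) \<and> x \<noteq> (0, n 0)"
    and E_strand: "\<forall>\<alpha>\<le>g. (\<Sum>i\<in>{0<..<n \<alpha>}. E (bvtx n \<alpha> i)) \<le> 1"
    and a_nonneg: "a \<ge> 0"
    and b_nonneg: "0 \<le> b"
    and b_le: "b \<le> int g - deg (banana_V g n) E"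
  shows "rank (banana_V g n) (banana_m g n)
           (\<lambda>x. (if x = (0,0) then a else 0) + (if x = (0, n 0) then b else 0) + E x)
         = min a b + max 0 (max a b - (int g - deg (banana_V g n) E))"
proof -
  have bn: "ban g n" using n_pos by (simp add: ban_def)
  show ?thesis using ban.main_loc[OF bn E_eff E_supp E_strand a_nonneg b_nonneg b_le] .
qed

end
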